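(* Let $\mu>0$, $\sigma>0$, $r=\sigma/\mu$, and let $k$ be the unique real solution of $\frac1r=\frac12(3k+k^3)$. Let $\tilde\rho=\frac{1}{1-\frac32rk}$ and $p=\mu-k\sigma$. Then $\tilde\rho$ is the unique solution in $[1,\infty)$ of $\frac{27}{4}r^2=\frac{(\tilde\rho-1)^3}{\tilde\rho^2}$, and moreover $1+\frac{27}{4}r^2\le\tilde\rho\le3+\frac{27}{4}r^2$ and $p=\frac{\tilde\rho+2}{3\tilde\rho}\mu$. *)

theory Defs
  imports Complex_Main
begin

end

theory Submission
  imports Defs
begin

lemma mono_aux:
  fixes u v :: real
  assumes "0 \<le> u" "u < v"
  shows "u ^ 3 / (1 + u) ^ 2 < v ^ 3 / (1 + v) ^ 2"
proof -
  have a: "u / (1 + u) < v / (1 + v)" using assms by (simp add: field_simps)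
  have b: "0 \<le> u / (1 + u)" using assms by simp
  have c: "(u / (1 + u)) ^ 2 \<le> (v / (1 + v)) ^ 2" using a b by (intro power_mono) auto
  have "u * (u / (1 + u)) ^ 2 < v * (v / (1 + v)) ^ 2"
  proof (cases "u = 0")
    case True then show ?thesis using assms by simp
  next
    case False
    then have "0 < u / (1 + u)" using assms by simp
    then have "0 < (u / (1 + u)) ^ 2" using False assms by simp
    show ?thesis by (rule mult_less_le_imp_less[OF assms(2) c]) (use assms \<open>0 < (u / (1 + u)) ^ 2\<close> in auto)
  qed
  then show ?thesis by (simp add: power_divide power2_eq_square power3_eq_cube)
qed

lemma inj_aux:
  fixes x y :: real
  assumes "x \<ge> 1" "y \<ge> 1" "(x - 1) ^ 3 / x ^ 2 = (y - 1) ^ 3 / y ^ 2"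
  shows "x = y"
proof -
  have e: "\<And>z::real. (z - 1) ^ 3 / z ^ 2 = (z - 1) ^ 3 / (1 + (z - 1)) ^ 2" by simp
  show ?thesis
  proof (rule ccontr)
    assume "x \<noteq> y"
    then consider "x < y" | "y < x" by linarith
    then show False
    proof cases
      case 1
      then have "(x - 1) ^ 3 / (1 + (x - 1)) ^ 2 < (y - 1) ^ 3 / (1 + (y - 1)) ^ 2"
        using assms by (intro mono_aux) auto
      then show False using assms(3) by simp
    next
      case 2
      then have "(y - 1) ^ 3 / (1 + (y - 1)) ^ 2 < (x - 1) ^ 3 / (1 + (x - 1)) ^ 2"
        using assms by (intro mono_aux) auto
      then show False using assms(3) by simp
    qed
  qed
qed

theorem lemma8:
  fixes \<mu> \<sigma> r k \<rho> p :: real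
  assumes "\<mu> > 0" and "\<sigma> > 0"
    and "r = \<sigma> / \<mu>"
    and "1 / r = (3 * k + k ^ 3) / 2"
    and "\<rho> = 1 / (1 - 3 / 2 * r * k)"
    and "p = \<mu> - k * \<sigma>"
  shows "\<rho> \<ge> 1 \<and> 27 / 4 * r ^ 2 = (\<rho> - 1) ^ 3 / \<rho> ^ 2
    \<and> (\<forall>x::real. x \<ge> 1 \<and> 27 / 4 * r ^ 2 = (x - 1) ^ 3 / x ^ 2 \<longrightarrow> x = \<rho>)
    \<and> 1 + 27 / 4 * r ^ 2 \<le> \<rho> \<and> \<rho> \<le> 3 + 27 / 4 * r ^ 2
    \<and> p = (\<rho> + 2) / (3 * \<rho>) * \<mu>"
proof -
  have rpos: "r > 0" using assms by simp
  have e1: "3 * k + k ^ 3 = k * (3 + k ^ 2)" by (simp add: algebra_simps power3_eq_cube power2_eq_square)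
  have kk: "k * (3 + k ^ 2) > 0" using assms(4) rpos e1 by (metis half_gt_zero_iff zero_less_divide_1_iff)
  have q: "3 + k ^ 2 > 0" by (simp add: add_pos_nonneg)
  have kpos: "k > 0" using kk q by (simp add: zero_less_mult_iff)
  have rk: "r = 2 / (k * (3 + k ^ 2))" using assms(4) e1 rpos kk by (simp add: field_simps)
  have t: "3 / 2 * r * k = 3 / (3 + k ^ 2)" unfolding rk using kpos q kk by (simp add: field_simps)
  have den: "1 - 3 / 2 * r * k = k ^ 2 / (3 + k ^ 2)" unfolding t using q by (simp add: field_simps)
  have rho0: "\<rho> = 1 / (k ^ 2 / (3 + k ^ 2))" using assms(5) den by simp
  have rho: "\<rho> = 1 + 3 / k ^ 2" unfolding rho0 using kpos q by (simp add: field_simps)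
  have sig: "\<sigma> = r * \<mu>" using assms(1,3) by simp
  define u where "u = 3 / k ^ 2"
  have u0: "u > 0" using kpos by (simp add: u_def)
  have c: "27 / 4 * r ^ 2 = u ^ 3 / (1 + u) ^ 2" unfolding u_def rk using kpos q
    by (simp add: field_simps power2_eq_square power3_eq_cube)
  have rhou: "\<rho> = 1 + u" using rho u_def by simp
  have A: "27 / 4 * r ^ 2 = (\<rho> - 1) ^ 3 / \<rho> ^ 2" using c rhou by simp
  have B: "1 + 27 / 4 * r ^ 2 \<le> \<rho>"
  proof -
    have p: "(1 + u) ^ 2 > 0" using u0 by simp
    have "u ^ 3 \<le> u * (1 + u) ^ 2" using u0 mult_pos_pos[OF u0 u0]
      by (simp add: power2_eq_square power3_eq_cube algebra_simps)
    then have "u ^ 3 / (1 + u) ^ 2 \<le> u" using p by (simp add: pos_divide_le_eq)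
    then show ?thesis using c rhou by simp
  qed
  have C: "\<rho> \<le> 3 + 27 / 4 * r ^ 2"
  proof -
    have p: "(1 + u) ^ 2 > 0" using u0 by simp
    have "(u - 2) * (1 + u) ^ 2 \<le> u ^ 3" using u0 mult_pos_pos[OF u0 u0]
      by (simp add: power2_eq_square power3_eq_cube algebra_simps)
    then have "u - 2 \<le> u ^ 3 / (1 + u) ^ 2" using p by (simp add: pos_le_divide_eq)
    then show ?thesis using c rhou by simp
  qed
  have D: "p = (\<rho> + 2) / (3 * \<rho>) * \<mu>"
  proof -
    have kr: "k * r = 2 / (3 + k ^ 2)" unfolding rk using kpos q kk by (simp add: field_simps)
    have p1: "p = \<mu> * (1 - k * r)" unfolding assms(6) sig by (simp add: algebra_simps)
    have p2: "1 - k * r = (1 + k ^ 2) / (3 + k ^ 2)" unfolding kr using q by (simp add: field_simps)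
    have r2: "\<rho> = (3 + k ^ 2) / k ^ 2" unfolding rho0 by simp
    have p3: "(\<rho> + 2) / (3 * \<rho>) = (1 + k ^ 2) / (3 + k ^ 2)" unfolding r2
    proof -
      have k2: "k ^ 2 > 0" using kpos by simp
      have "((3 + k ^ 2) / k ^ 2 + 2) = 3 * (1 + k ^ 2) / k ^ 2" using k2 by (simp add: field_simps)
      moreover have "3 * ((3 + k ^ 2) / k ^ 2) = 3 * (3 + k ^ 2) / k ^ 2" by simp
      ultimately have "((3 + k ^ 2) / k ^ 2 + 2) / (3 * ((3 + k ^ 2) / k ^ 2))
         = (3 * (1 + k ^ 2) / k ^ 2) / (3 * (3 + k ^ 2) / k ^ 2)" by simp
      also have "\<dots> = (3 * (1 + k ^ 2)) / (3 * (3 + k ^ 2))" using k2 by (simp add: divide_divide_eq_left)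
      also have "\<dots> = (1 + k ^ 2) / (3 + k ^ 2)" by (rule mult_divide_mult_cancel_left) simp
      finally show "((3 + k ^ 2) / k ^ 2 + 2) / (3 * ((3 + k ^ 2) / k ^ 2)) = (1 + k ^ 2) / (3 + k ^ 2)" .
    qed
    show ?thesis using p1 p2 p3 by simp
  qed
  show ?thesis using A B C D rhou u0 inj_aux[of _ \<rho>] by auto
qed

end
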